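(* Let $n$ be a positive integer, $g=3n+1$, and let $G=\{\ell_1<\dots<\ell_g\}$ be a pure $(2n)$-sparse gapset of genus $g$ with multiplicity $m$ and depth $q\le 3$. Let $\alpha=\max\{i:\ell_{i+1}-\ell_i=2n\}$. Then $\ell_\alpha\le 2m-1$.
   Context: A gapset is a finite set $G\subset\mathbb{N}=\{1,2,\dots\}$ such that whenever $z\in G$ and $z=x+y$ with $x,y\in\mathbb{N}$, then $x\in G$ or $y\in G$; its genus is $g=\#G$. Multiplicity $m(G)=\min\{s\in\mathbb{N}:s\notin G\}$; conductor $c(G)=\min\{s\in\mathbb{N}: s+t\notin G\ \forall t\in\mathbb{N}_0\}$; depth $q(G)=\lceil c(G)/m(G)\rceil$. $G$ is pure $\kappa$-sparse if $\ell_{i+1}-\ell_i\le\kappa$ for all $i$ with equality for some $i$. *)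

theory Defs
  imports Main
begin

definition gapset :: "nat set \<Rightarrow> bool" where
  "gapset G \<longleftrightarrow> finite G \<and> 0 \<notin> G \<and>
     (\<forall>z\<in>G. \<forall>x y. x \<ge> 1 \<and> y \<ge> 1 \<and> z = x + y \<longrightarrow> x \<in> G \<or> y \<in> G)"

definition genus :: "nat set \<Rightarrow> nat" where
  "genus G = card G"

definition multiplicity :: "nat set \<Rightarrow> nat" where
  "multiplicity G = (LEAST s. s \<ge> 1 \<and> s \<notin> G)"

definition conductor :: "nat set \<Rightarrow> nat" where
  "conductor G = (LEAST s. s \<ge> 1 \<and> (\<forall>t. s + t \<notin> G))"

text \<open>depth q = ceiling(c/m), written in nat arithmetic (m is always positive)\<close>
definition depth :: "nat set \<Rightarrow> nat" where
  "depth G = (conductor G + multiplicity G - 1) div multiplicity G"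

text \<open>ell G i is the i-th smallest gap (1-indexed), for 1 \<le> i \<le> card G\<close>
definition ell :: "nat set \<Rightarrow> nat \<Rightarrow> nat" where
  "ell G i = sorted_list_of_set G ! (i - 1)"

definition pure_sparse :: "nat \<Rightarrow> nat set \<Rightarrow> bool" where
  "pure_sparse \<kappa> G \<longleftrightarrow>
     (\<forall>i. 1 \<le> i \<and> i < card G \<longrightarrow> ell G (i+1) - ell G i \<le> \<kappa>) \<and>
     (\<exists>i. 1 \<le> i \<and> i < card G \<and> ell G (i+1) - ell G i = \<kappa>)"

end

theory Submission
  imports Defs
begin

lemma ell_in:
  assumes "finite G" "1 \<le> i" "i \<le> card G"
  shows "ell G i \<in> G"
proof -
  have "i - 1 < length (sorted_list_of_set G)" using assms by simp
  hence "sorted_list_of_set G ! (i-1) \<in> set (sorted_list_of_set G)" by (rule nth_mem)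
  thus ?thesis using assms(1) by (simp add: ell_def)
qed

theorem mainTheorem16:
  fixes n :: nat and G :: "nat set"
  assumes "n \<ge> 1"
    and "gapset G"
    and "genus G = 3 * n + 1"
    and "pure_sparse (2 * n) G"
    and "depth G \<le> 3"
  shows "ell G (Max {i. 1 \<le> i \<and> i < genus G \<and> ell G (i+1) - ell G i = 2 * n})
           \<le> 2 * multiplicity G - 1"
proof -
  have fin: "finite G" and g0: "0 \<notin> G"
    and gs: "\<And>z a b. z \<in> G \<Longrightarrow> a \<ge> 1 \<Longrightarrow> b \<ge> 1 \<Longrightarrow> z = a + b \<Longrightarrow> a \<in> G \<or> b \<in> G"
    using assms(2) unfolding gapset_def by blast+
  have cardG: "card G = 3*n+1" using assms(3) by (simp add: genus_def)
  define A where "A = {i. 1 \<le> i \<and> i < genus G \<and> ell G (i+1) - ell G i = 2 * n}"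
  define \<alpha> where "\<alpha> = Max A"
  have finA: "finite A" unfolding A_def by (rule finite_subset[of _ "{..<genus G}"]) auto
  have neA: "A \<noteq> {}" using assms(4) unfolding A_def pure_sparse_def genus_def by auto
  have "\<alpha> \<in> A" unfolding \<alpha>_def using finA neA by simp
  hence a1: "1 \<le> \<alpha>" and a2: "\<alpha> < card G" and a3: "ell G (\<alpha>+1) - ell G \<alpha> = 2*n"
    unfolding A_def genus_def by auto
  define x where "x = ell G \<alpha>"
  define y where "y = ell G (\<alpha>+1)"
  have xG: "x \<in> G" unfolding x_def using ell_in[OF fin a1] a2 by simp
  have yG: "y \<in> G" unfolding y_def using ell_in[OF fin, of "\<alpha>+1"] a2 by simp
  have yx: "y = x + 2*n" using a3 assms(1) unfolding x_def y_def by simp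
  define m where "m = multiplicity G"
  have exm: "\<exists>s. s \<ge> 1 \<and> s \<notin> G"
  proof -
    have "Max G + 1 \<notin> G"
    proof
      assume "Max G + 1 \<in> G" then have "Max G + 1 \<le> Max G" using fin by (rule Max_ge[rotated])
      thus False by simp
    qed
    thus ?thesis by auto
  qed
  have m1: "m \<ge> 1" and mG: "m \<notin> G"
    using LeastI_ex[OF exm] unfolding m_def multiplicity_def by auto
  have below: "\<And>k. 1 \<le> k \<Longrightarrow> k < m \<Longrightarrow> k \<in> G"
  proof -
    fix k assume "1 \<le> k" "k < m"
    hence "\<not> (k \<ge> 1 \<and> k \<notin> G)" using not_less_Least[of k "\<lambda>s. s \<ge> 1 \<and> s \<notin> G"]
      unfolding m_def multiplicity_def by blast
    thus "k \<in> G" using \<open>1 \<le> k\<close> by simp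
  qed
  define c where "c = conductor G"
  have exc: "\<exists>s. s \<ge> 1 \<and> (\<forall>t. s + t \<notin> G)"
  proof -
    have "\<forall>t. Max G + 1 + t \<notin> G"
    proof (intro allI notI)
      fix t assume "Max G + 1 + t \<in> G" then have "Max G + 1 + t \<le> Max G" using fin by (rule Max_ge[rotated])
      thus False by simp
    qed
    thus ?thesis by (intro exI[of _ "Max G + 1"]) auto
  qed
  have cgap: "\<And>t. c + t \<notin> G"
    using LeastI_ex[OF exc] unfolding c_def conductor_def by auto
  have ltc: "\<And>z. z \<in> G \<Longrightarrow> z < c"
  proof (rule ccontr)
    fix z assume "z \<in> G" "\<not> z < c"
    then have "c + (z - c) \<in> G" by simp
    thus False using cgap by blast
  qed
  have "(c + m - 1) div m \<le> 3" using assms(5) unfolding depth_def c_def m_def .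
  hence "(c + m - 1) div m < 4" by simp
  hence "c + m - 1 < 4 * m" using div_less_iff_less_mult[of m "c+m-1" 4] m1 by simp
  hence c3: "c \<le> 3*m" by simp
  have y3: "y < 3*m" using ltc[OF yG] c3 by simp
  show ?thesis
  proof (rule ccontr)
    assume "\<not> ?thesis"
    hence x2: "x \<ge> 2*m" unfolding x_def \<alpha>_def A_def m_def by simp
    define I where "I = {m..y-m}"
    define K where "K = G \<inter> I"
    have "I \<subseteq> K \<union> (\<lambda>k. y - k) ` K"
    proof
      fix k assume kI: "k \<in> I"
      show "k \<in> K \<union> (\<lambda>k. y - k) ` K"
      proof (cases "k \<in> G")
        case True thus ?thesis using kI K_def by auto
      next
        case False
        have "k \<in> G \<or> y - k \<in> G" using gs[OF yG, of k "y-k"] kI m1 x2 yx unfolding I_def by auto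
        hence "y - k \<in> G" using False by simp
        moreover have "y - k \<in> I" using kI x2 yx unfolding I_def by auto
        moreover have "k = y - (y - k)" using kI x2 yx unfolding I_def by auto
        ultimately show ?thesis unfolding K_def by blast
      qed
    qed
    have finK: "finite K" unfolding K_def I_def by simp
    have "card I \<le> card (K \<union> (\<lambda>k. y - k) ` K)"
      using \<open>I \<subseteq> _\<close> finK by (intro card_mono) auto
    also have "\<dots> \<le> card K + card ((\<lambda>k. y - k) ` K)" by (rule card_Un_le)
    also have "\<dots> \<le> 2 * card K" using card_image_le[OF finK, of "\<lambda>k. y - k"] by simp
    finally have cI: "card I \<le> 2 * card K" .
    have cardI: "card I = y - m + 1 - m" unfolding I_def by simp
    have disj: "{1..<m} \<union> K \<union> {x, y} \<subseteq> G" using below xG yG K_def by auto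
    have d1: "{1..<m} \<inter> K = {}" unfolding K_def I_def by auto
    have d2: "({1..<m} \<union> K) \<inter> {x, y} = {}" unfolding K_def I_def using x2 yx m1 y3 by auto
    have "card ({1..<m} \<union> K \<union> {x, y}) = (m - 1) + card K + 2"
      using d1 d2 finK yx assms(1) by (simp add: card_Un_disjoint)
    moreover have "card ({1..<m} \<union> K \<union> {x, y}) \<le> card G"
      using disj fin by (rule card_mono[rotated])
    ultimately have "(m - 1) + card K + 2 \<le> 3*n+1" using cardG by simp
    thus False using cI cardI x2 yx y3 m1 by linarith
  qed
qed

end
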